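(* Let $G_1$ and $G_2$ be connected bipartite graphs, where $G_i$ has bipartition $(A_i,B_i)$ with $|A_i|,|B_i|\ge 3$, and let $H_1,H_2$ be the graphs obtained from them by the construction described in the context. Then $G_1\simeq G_2$ if and only if $H_1\simeq H_2$.
   Context: All graphs are finite, simple, undirected; $\simeq$ denotes graph isomorphism. Construction: given a bipartite graph $G$ with bipartition $(A,B)$, the graph $H$ has vertex set $A\cup B\cup C$ where $C=\{c_e : e\in E(G)\}$ is a set of new vertices, one per edge of $G$; its edges are: all pairs $ab$ with $a\in A$, $b\in B$ (so $A\cup B$ induces the complete bipartite graph with parts $A,B$), and for each edge $e=ab$ of $G$ ($a\in A$, $b\in B$) the two edges $ac_e$ and $bc_e$. There are no other edges. *)

theory Defs
  imports Main
begin

definition graph :: "'a set \<Rightarrow> 'a set set \<Rightarrow> bool" where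
  "graph V E \<longleftrightarrow> finite V \<and> (\<forall>e\<in>E. \<exists>u v. e = {u, v} \<and> u \<noteq> v \<and> u \<in> V \<and> v \<in> V)"

definition adj :: "'a set set \<Rightarrow> 'a \<Rightarrow> 'a \<Rightarrow> bool" where
  "adj E u v \<longleftrightarrow> {u, v} \<in> E"

definition connected_graph :: "'a set \<Rightarrow> 'a set set \<Rightarrow> bool" where
  "connected_graph V E \<longleftrightarrow> graph V E \<and> (\<forall>u\<in>V. \<forall>v\<in>V. (adj E)\<^sup>*\<^sup>* u v)"

definition bipartite_with :: "'a set \<Rightarrow> 'a set set \<Rightarrow> 'a set \<Rightarrow> 'a set \<Rightarrow> bool" where
  "bipartite_with V E A B \<longleftrightarrow> graph V E \<and> A \<inter> B = {} \<and> A \<union> B = V \<and>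
     (\<forall>e\<in>E. \<exists>a b. a \<in> A \<and> b \<in> B \<and> e = {a, b})"

definition graph_iso :: "'a set \<Rightarrow> 'a set set \<Rightarrow> 'b set \<Rightarrow> 'b set set \<Rightarrow> bool" where
  "graph_iso V1 E1 V2 E2 \<longleftrightarrow> (\<exists>f. bij_betw f V1 V2 \<and>
     (\<forall>u\<in>V1. \<forall>v\<in>V1. {u, v} \<in> E1 \<longleftrightarrow> {f u, f v} \<in> E2))"

text \<open>The construction H: vertices A \<union> B (tagged Inl) and one new vertex c_e = Inr e per edge e.\<close>
definition H_verts :: "'a set \<Rightarrow> 'a set \<Rightarrow> 'a set set \<Rightarrow> ('a + 'a set) set" where
  "H_verts A B E = Inl ` (A \<union> B) \<union> Inr ` E"

definition H_edges :: "'a set \<Rightarrow> 'a set \<Rightarrow> 'a set set \<Rightarrow> ('a + 'a set) set set" where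
  "H_edges A B E = {{Inl a, Inl b} | a b. a \<in> A \<and> b \<in> B}
                 \<union> {{Inl x, Inr e} | x e. e \<in> E \<and> x \<in> e}"

end

theory Submission
  imports Defs
begin

lemma three_elems:
  assumes "card S \<ge> 3"
  shows "\<exists>a b c. a \<in> S \<and> b \<in> S \<and> c \<in> S \<and> a \<noteq> b \<and> a \<noteq> c \<and> b \<noteq> c"
proof -
  have "finite S" using assms by (metis card.infinite not_numeral_le_zero)
  obtain T where "T \<subseteq> S" "card T = 3" using assms
    by (metis obtain_subset_with_card_n)
  then obtain a b c where "T = {a,b,c}" "a\<noteq>b" "a\<noteq>c" "b\<noteq>c" by (metis card_3_iff)
  then show ?thesis using \<open>T \<subseteq> S\<close> by blast
qed

lemma H_edge_ll: "{Inl x, Inl y} \<in> H_edges A B E \<longleftrightarrow> (x\<in>A \<and> y\<in>B) \<or> (y\<in>A \<and> x\<in>B)"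
  unfolding H_edges_def by (auto simp: doubleton_eq_iff)

lemma H_edge_lr: "{Inl x, Inr e} \<in> H_edges A B E \<longleftrightarrow> e\<in>E \<and> x\<in>e"
  unfolding H_edges_def by (auto simp: doubleton_eq_iff)

lemma H_edge_rl: "{Inr e, Inl x} \<in> H_edges A B E \<longleftrightarrow> e\<in>E \<and> x\<in>e"
  using H_edge_lr by (metis insert_commute)

lemma H_edge_rr: "{Inr e, Inr e'} \<notin> H_edges A B E"
  unfolding H_edges_def by (auto simp: doubleton_eq_iff)

definition big :: "'v set \<Rightarrow> 'v set set \<Rightarrow> 'v \<Rightarrow> bool" where
  "big V E v \<longleftrightarrow> (\<exists>a b c. a\<in>V \<and> b\<in>V \<and> c\<in>V \<and> a \<noteq> b \<and> a \<noteq> c \<and> b \<noteq> c \<and>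
      {v,a}\<in>E \<and> {v,b}\<in>E \<and> {v,c}\<in>E)"

lemma iso_big:
  assumes bij: "bij_betw h V V'" and pres: "\<forall>u\<in>V. \<forall>v\<in>V. {u,v}\<in>E \<longleftrightarrow> {h u,h v}\<in>E'" and v: "v\<in>V"
  shows "big V E v \<longleftrightarrow> big V' E' (h v)"
proof
  assume "big V E v"
  then obtain a b c where abc: "a\<in>V" "b\<in>V" "c\<in>V" "a \<noteq> b" "a \<noteq> c" "b \<noteq> c"
      "{v,a}\<in>E" "{v,b}\<in>E" "{v,c}\<in>E" unfolding big_def by blast
  have inj: "inj_on h V" using bij by (rule bij_betw_imp_inj_on)
  have "h a \<in> V'" "h b \<in> V'" "h c \<in> V'" using abc bij bij_betw_apply by metis+
  moreover have "h a \<noteq> h b" "h a \<noteq> h c" "h b \<noteq> h c" using abc inj by (metis inj_on_eq_iff)+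
  moreover have "{h v,h a}\<in>E'" "{h v,h b}\<in>E'" "{h v,h c}\<in>E'" using abc pres v by blast+
  ultimately show "big V' E' (h v)" unfolding big_def by blast
next
  assume "big V' E' (h v)"
  then obtain a b c where abc: "a\<in>V'" "b\<in>V'" "c\<in>V'" "a \<noteq> b" "a \<noteq> c" "b \<noteq> c"
      "{h v,a}\<in>E'" "{h v,b}\<in>E'" "{h v,c}\<in>E'" unfolding big_def by blast
  have im: "h ` V = V'" using bij by (rule bij_betw_imp_surj_on)
  obtain a0 where a0: "a0\<in>V" "a = h a0" using abc(1) im by blast
  obtain b0 where b0: "b0\<in>V" "b = h b0" using abc(2) im by blast
  obtain c0 where c0: "c0\<in>V" "c = h c0" using abc(3) im by blast
  have "{v,a0}\<in>E" "{v,b0}\<in>E" "{v,c0}\<in>E" using abc a0 b0 c0 pres v by blast+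
  moreover have "a0 \<noteq> b0" "a0 \<noteq> c0" "b0 \<noteq> c0" using abc a0 b0 c0 by blast+
  ultimately show "big V E v" unfolding big_def using a0 b0 c0 by blast
qed

context
  fixes A B :: "'a set" and E :: "'a set set"
  assumes bip: "bipartite_with (A \<union> B) E A B" and cA: "card A \<ge> 3" and cB: "card B \<ge> 3"
begin

lemma edge_form: "e \<in> E \<Longrightarrow> \<exists>a b. a\<in>A \<and> b\<in>B \<and> e = {a,b}"
  using bip unfolding bipartite_with_def by blast

lemma disj: "A \<inter> B = {}" using bip unfolding bipartite_with_def by blast

lemma big_iff: "v \<in> H_verts A B E \<Longrightarrow> big (H_verts A B E) (H_edges A B E) v \<longleftrightarrow> (\<exists>x. v = Inl x)"
proof
  assume v: "v \<in> H_verts A B E" and "big (H_verts A B E) (H_edges A B E) v"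
  then obtain a b c where abc: "a \<noteq> b" "a \<noteq> c" "b \<noteq> c"
      "{v,a}\<in>H_edges A B E" "{v,b}\<in>H_edges A B E" "{v,c}\<in>H_edges A B E" unfolding big_def by blast
  show "\<exists>x. v = Inl x"
  proof (rule ccontr)
    assume "\<nexists>x. v = Inl x"
    then obtain e where e: "v = Inr e" by (cases v) auto
    have nb: "\<And>w. {v,w} \<in> H_edges A B E \<Longrightarrow> \<exists>x. w = Inl x \<and> x \<in> e \<and> e \<in> E"
    proof -
      fix w assume "{v,w} \<in> H_edges A B E"
      then show "\<exists>x. w = Inl x \<and> x \<in> e \<and> e \<in> E"
      proof (cases w)
        case (Inl x) then show ?thesis using \<open>{v,w} \<in> H_edges A B E\<close> e by (simp add: H_edge_rl)
      next
        case (Inr e') then show ?thesis using \<open>{v,w} \<in> H_edges A B E\<close> e by (simp add: H_edge_rr)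
      qed
    qed
    from nb[OF abc(4)] nb[OF abc(5)] nb[OF abc(6)] obtain x y z where
      "a = Inl x" "b = Inl y" "c = Inl z" "x\<in>e" "y\<in>e" "z\<in>e" "e\<in>E" by blast
    moreover from edge_form[OF \<open>e\<in>E\<close>] obtain p q where "e = {p,q}" by blast
    ultimately show False using abc by blast
  qed
next
  assume v: "v \<in> H_verts A B E" and "\<exists>x. v = Inl x"
  then obtain x where x: "v = Inl x" "x \<in> A \<union> B" unfolding H_verts_def by auto
  show "big (H_verts A B E) (H_edges A B E) v"
  proof (cases "x \<in> A")
    case True
    from three_elems[OF cB] obtain p q r where "p\<in>B" "q\<in>B" "r\<in>B" "p\<noteq>q" "p\<noteq>r" "q\<noteq>r" by blast
    moreover have "{v, Inl p} \<in> H_edges A B E" "{v, Inl q} \<in> H_edges A B E" "{v, Inl r} \<in> H_edges A B E"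
      using x True \<open>p\<in>B\<close> \<open>q\<in>B\<close> \<open>r\<in>B\<close> by (simp_all add: H_edge_ll)
    moreover have "Inl p \<in> H_verts A B E" "Inl q \<in> H_verts A B E" "Inl r \<in> H_verts A B E"
      using \<open>p\<in>B\<close> \<open>q\<in>B\<close> \<open>r\<in>B\<close> by (simp_all add: H_verts_def)
    ultimately show ?thesis unfolding big_def by (metis sum.inject(1))
  next
    case False
    then have "x \<in> B" using x by auto
    from three_elems[OF cA] obtain p q r where "p\<in>A" "q\<in>A" "r\<in>A" "p\<noteq>q" "p\<noteq>r" "q\<noteq>r" by blast
    moreover have "{v, Inl p} \<in> H_edges A B E" "{v, Inl q} \<in> H_edges A B E" "{v, Inl r} \<in> H_edges A B E"
      using x \<open>x\<in>B\<close> \<open>p\<in>A\<close> \<open>q\<in>A\<close> \<open>r\<in>A\<close> by (simp_all add: H_edge_ll)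
    moreover have "Inl p \<in> H_verts A B E" "Inl q \<in> H_verts A B E" "Inl r \<in> H_verts A B E"
      using \<open>p\<in>A\<close> \<open>q\<in>A\<close> \<open>r\<in>A\<close> by (simp_all add: H_verts_def)
    ultimately show ?thesis unfolding big_def by (metis sum.inject(1))
  qed
qed

lemma common_iff:
  assumes "x \<noteq> y"
  shows "{x,y} \<in> E \<longleftrightarrow> (\<exists>c\<in>H_verts A B E. \<not> big (H_verts A B E) (H_edges A B E) c \<and>
      {Inl x, c} \<in> H_edges A B E \<and> {Inl y, c} \<in> H_edges A B E)"
proof
  assume xy: "{x,y} \<in> E"
  have m: "Inr {x,y} \<in> H_verts A B E" using xy by (simp add: H_verts_def)
  moreover have "\<not> big (H_verts A B E) (H_edges A B E) (Inr {x,y})" using big_iff[OF m] by simp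
  moreover have "{Inl x, Inr {x,y}} \<in> H_edges A B E" "{Inl y, Inr {x,y}} \<in> H_edges A B E"
    using xy by (simp_all add: H_edge_lr)
  ultimately show "\<exists>c\<in>H_verts A B E. \<not> big (H_verts A B E) (H_edges A B E) c \<and>
      {Inl x, c} \<in> H_edges A B E \<and> {Inl y, c} \<in> H_edges A B E" by blast
next
  assume "\<exists>c\<in>H_verts A B E. \<not> big (H_verts A B E) (H_edges A B E) c \<and>
      {Inl x, c} \<in> H_edges A B E \<and> {Inl y, c} \<in> H_edges A B E"
  then obtain c where c: "c\<in>H_verts A B E" "\<not> big (H_verts A B E) (H_edges A B E) c"
      "{Inl x, c} \<in> H_edges A B E" "{Inl y, c} \<in> H_edges A B E" by blast
  obtain e where e: "c = Inr e" using big_iff[OF c(1)] c(2) by (cases c) auto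
  have "e \<in> E" "x \<in> e" "y \<in> e" using c(3,4) unfolding e by (simp_all add: H_edge_lr)
  moreover from edge_form[OF \<open>e\<in>E\<close>] obtain p q where "e = {p,q}" by blast
  ultimately show "{x,y} \<in> E" using assms by (metis empty_iff insertE insert_commute)
qed

end

lemma graph_no_loop: "graph V E \<Longrightarrow> {u} \<notin> E"
  unfolding graph_def by (auto simp: doubleton_eq_iff)

lemma side_pres:
  assumes b1: "bipartite_with V1 E1 A1 B1" and c1: "connected_graph V1 E1"
  and b2: "bipartite_with V2 E2 A2 B2"
  and pres: "\<forall>u\<in>V1. \<forall>v\<in>V1. {u,v}\<in>E1 \<longleftrightarrow> {f u, f v}\<in>E2"
  and u: "u\<in>V1" and v: "v\<in>V1"
  shows "((u\<in>A1) = (v\<in>A1)) = ((f u\<in>A2) = (f v\<in>A2))"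
proof -
  have e1: "\<forall>e\<in>E1. \<exists>a b. a \<in> A1 \<and> b \<in> B1 \<and> e = {a, b}" and d1: "A1 \<inter> B1 = {}" "A1 \<union> B1 = V1"
    using b1 unfolding bipartite_with_def by blast+
  have e2: "\<forall>e\<in>E2. \<exists>a b. a \<in> A2 \<and> b \<in> B2 \<and> e = {a, b}" and d2: "A2 \<inter> B2 = {}"
    using b2 unfolding bipartite_with_def by blast+
  have "(adj E1)\<^sup>*\<^sup>* u v" using c1 u v unfolding connected_graph_def by blast
  then show ?thesis using v
  proof (induction rule: rtranclp_induct)
    case base show ?case by simp
  next
    case (step y z)
    from step.hyps(2) have yz: "{y,z}\<in>E1" by (simp add: adj_def)
    then obtain a b where ab: "a\<in>A1" "b\<in>B1" "{y,z}={a,b}" using e1 by blast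
    have "(y = a \<and> z = b) \<or> (y = b \<and> z = a)" using ab(3) by (simp add: doubleton_eq_iff)
    then have y: "y\<in>V1" and s1: "(y\<in>A1) \<noteq> (z\<in>A1)" using ab d1 by auto
    have "{f y, f z}\<in>E2" using pres y step.prems yz by blast
    then obtain a' b' where ab': "a'\<in>A2" "b'\<in>B2" "{f y, f z}={a',b'}" using e2 by blast
    have "(f y = a' \<and> f z = b') \<or> (f y = b' \<and> f z = a')" using ab'(3) by (simp add: doubleton_eq_iff)
    then have s2: "(f y\<in>A2) \<noteq> (f z\<in>A2)" using ab' d2 by auto
    have "((u\<in>A1) = (y\<in>A1)) = ((f u\<in>A2) = (f y\<in>A2))" by (rule step.IH[OF y])
    with s1 s2 show ?case by blast
  qed
qed

lemma fwd:
  assumes b1: "bipartite_with V1 E1 A1 B1" and c1: "connected_graph V1 E1"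
  and b2: "bipartite_with V2 E2 A2 B2"
  and iso: "graph_iso V1 E1 V2 E2"
  shows "graph_iso (H_verts A1 B1 E1) (H_edges A1 B1 E1) (H_verts A2 B2 E2) (H_edges A2 B2 E2)"
proof -
  obtain f where bij: "bij_betw f V1 V2" and pres: "\<forall>u\<in>V1. \<forall>v\<in>V1. {u,v}\<in>E1 \<longleftrightarrow> {f u, f v}\<in>E2"
    using iso unfolding graph_iso_def by auto
  have V1: "A1 \<union> B1 = V1" and d1: "A1 \<inter> B1 = {}" and g1: "graph V1 E1" using b1 unfolding bipartite_with_def by blast+
  have V2: "A2 \<union> B2 = V2" and d2: "A2 \<inter> B2 = {}" and g2: "graph V2 E2" using b2 unfolding bipartite_with_def by blast+
  have ge1: "\<forall>e\<in>E1. \<exists>u v. e = {u, v} \<and> u \<noteq> v \<and> u \<in> V1 \<and> v \<in> V1" using g1 unfolding graph_def by simp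
  have ge2: "\<forall>e\<in>E2. \<exists>u v. e = {u, v} \<and> u \<noteq> v \<and> u \<in> V2 \<and> v \<in> V2" using g2 unfolding graph_def by simp
  have inj: "inj_on f V1" using bij by (rule bij_betw_imp_inj_on)
  have im: "f ` V1 = V2" using bij by (rule bij_betw_imp_surj_on)
  have Esub: "\<And>e. e \<in> E1 \<Longrightarrow> e \<subseteq> V1" using ge1 by fastforce
  have eim: "image f ` E1 = E2"
  proof
    show "image f ` E1 \<subseteq> E2"
    proof
      fix e' assume "e' \<in> image f ` E1"
      then obtain e where e: "e \<in> E1" "e' = f ` e" by blast
      then obtain u v where uv: "e = {u,v}" "u \<in> V1" "v \<in> V1" using ge1 by blast
      then have "{f u, f v} \<in> E2" using pres[rule_format, OF uv(2,3)] e by simp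
      then show "e' \<in> E2" using e uv by simp
    qed
  next
    show "E2 \<subseteq> image f ` E1"
    proof
      fix e' assume e': "e' \<in> E2"
      then obtain u' v' where uv: "e' = {u',v'}" "u' \<in> V2" "v' \<in> V2" using ge2 by blast
      obtain u where u: "u \<in> V1" "u' = f u" using uv im by blast
      obtain v where v: "v \<in> V1" "v' = f v" using uv im by blast
      have "{u,v} \<in> E1" using pres[rule_format, OF u(1) v(1)] u v e' uv by simp
      moreover have "e' = f ` {u,v}" using uv u v by simp
      ultimately show "e' \<in> image f ` E1" by blast
    qed
  qed
  define g where "g = case_sum (\<lambda>x. Inl (f x)) (\<lambda>e. Inr (f ` e))"
  have gl: "g (Inl x) = Inl (f x)" for x by (simp add: g_def)
  have gr: "g (Inr e) = Inr (f ` e)" for e by (simp add: g_def)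
  have H1: "H_verts A1 B1 E1 = Inl ` V1 \<union> Inr ` E1" using V1 by (simp add: H_verts_def)
  have H2: "H_verts A2 B2 E2 = Inl ` V2 \<union> Inr ` E2" using V2 by (simp add: H_verts_def)
  have "g ` (Inl ` V1) = Inl ` (f ` V1)" by (simp add: image_image gl)
  then have a1: "g ` (Inl ` V1) = Inl ` V2" using im by simp
  have "g ` (Inr ` E1) = Inr ` (image f ` E1)" by (simp add: image_image gr)
  then have a2: "g ` (Inr ` E1) = Inr ` E2" using eim by simp
  have gim: "g ` H_verts A1 B1 E1 = H_verts A2 B2 E2" unfolding H1 H2 image_Un a1 a2 ..
  have ginj: "inj_on g (H_verts A1 B1 E1)"
  proof (rule inj_onI)
    fix x y assume x: "x \<in> H_verts A1 B1 E1" and y: "y \<in> H_verts A1 B1 E1" and eq: "g x = g y"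
    show "x = y"
    proof (cases x)
      case (Inl a)
      then have a: "a \<in> V1" using x H1 by auto
      show ?thesis
      proof (cases y)
        case (Inl b)
        then have b: "b \<in> V1" using y H1 by auto
        have "f a = f b" using eq \<open>x = Inl a\<close> Inl gl by simp
        then show ?thesis using inj a b \<open>x = Inl a\<close> Inl by (simp add: inj_on_eq_iff)
      next
        case (Inr e) then show ?thesis using eq \<open>x = Inl a\<close> gl gr by simp
      qed
    next
      case (Inr e)
      then have e: "e \<in> E1" using x H1 by auto
      show ?thesis
      proof (cases y)
        case (Inl b) then show ?thesis using eq \<open>x = Inr e\<close> gl gr by simp
      next
        case (Inr e')
        then have e': "e' \<in> E1" using y H1 by auto
        have "f ` e = f ` e'" using eq \<open>x = Inr e\<close> Inr gr by simp
        then have "e = e'" using inj_on_image_eq_iff[OF inj Esub[OF e] Esub[OF e']] by simp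
        then show ?thesis using \<open>x = Inr e\<close> Inr by simp
      qed
    qed
  qed
  have gbij: "bij_betw g (H_verts A1 B1 E1) (H_verts A2 B2 E2)" using ginj gim by (simp add: bij_betw_def)
  have side: "\<And>u v. u \<in> V1 \<Longrightarrow> v \<in> V1 \<Longrightarrow> ((u\<in>A1) = (v\<in>A1)) = ((f u\<in>A2) = (f v\<in>A2))"
    using side_pres[OF b1 c1 b2 pres] by blast
  have ll: "{Inl x, Inl y} \<in> H_edges A1 B1 E1 \<longleftrightarrow> {Inl (f x), Inl (f y)} \<in> H_edges A2 B2 E2"
    if x: "x \<in> V1" and y: "y \<in> V1" for x y
  proof -
    have fx: "f x \<in> V2" "f y \<in> V2" using x y im by blast+
    have bx: "(x\<in>B1) = (x\<notin>A1)" "(y\<in>B1) = (y\<notin>A1)" using x y V1 d1 by blast+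
    have by': "(f x\<in>B2) = (f x\<notin>A2)" "(f y\<in>B2) = (f y\<notin>A2)" using fx V2 d2 by blast+
    have "{Inl x, Inl y} \<in> H_edges A1 B1 E1 \<longleftrightarrow> (x\<in>A1) \<noteq> (y\<in>A1)"
      unfolding H_edge_ll bx by argo
    moreover have "{Inl (f x), Inl (f y)} \<in> H_edges A2 B2 E2 \<longleftrightarrow> (f x\<in>A2) \<noteq> (f y\<in>A2)"
      unfolding H_edge_ll by' by argo
    ultimately show ?thesis using side[OF x y] by argo
  qed
  have lr: "{Inl x, Inr e} \<in> H_edges A1 B1 E1 \<longleftrightarrow> {Inl (f x), Inr (f ` e)} \<in> H_edges A2 B2 E2"
    if x: "x \<in> V1" and e: "e \<in> E1" for x e
  proof -
    have "f ` e \<in> E2" using eim e by blast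
    moreover have "f x \<in> f ` e \<longleftrightarrow> x \<in> e" using inj_on_image_mem_iff[OF inj x Esub[OF e]] .
    ultimately show ?thesis using e by (simp add: H_edge_lr)
  qed
  have "\<forall>u\<in>H_verts A1 B1 E1. \<forall>v\<in>H_verts A1 B1 E1.
      {u,v} \<in> H_edges A1 B1 E1 \<longleftrightarrow> {g u, g v} \<in> H_edges A2 B2 E2"
  proof (intro ballI)
    fix u v assume u: "u \<in> H_verts A1 B1 E1" and v: "v \<in> H_verts A1 B1 E1"
    show "{u,v} \<in> H_edges A1 B1 E1 \<longleftrightarrow> {g u, g v} \<in> H_edges A2 B2 E2"
    proof (cases u)
      case (Inl x)
      then have x: "x \<in> V1" using u H1 by auto
      show ?thesis
      proof (cases v)
        case (Inl y)
        then have y: "y \<in> V1" using v H1 by auto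
        show ?thesis using ll[OF x y] \<open>u = Inl x\<close> Inl gl by simp
      next
        case (Inr e)
        then have e: "e \<in> E1" using v H1 by auto
        show ?thesis using lr[OF x e] \<open>u = Inl x\<close> Inr gl gr by simp
      qed
    next
      case (Inr e)
      then have e: "e \<in> E1" using u H1 by auto
      show ?thesis
      proof (cases v)
        case (Inl y)
        then have y: "y \<in> V1" using v H1 by auto
        show ?thesis using lr[OF y e] \<open>u = Inr e\<close> Inl gl gr by (simp add: insert_commute)
      next
        case (Inr e')
        show ?thesis using \<open>u = Inr e\<close> Inr gr by (simp add: H_edge_rr)
      qed
    qed
  qed
  then show ?thesis unfolding graph_iso_def using gbij by auto
qed

lemma bwd:
  assumes b1: "bipartite_with V1 E1 A1 B1" and cA1: "card A1 \<ge> 3" and cB1: "card B1 \<ge> 3"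
  and b2: "bipartite_with V2 E2 A2 B2" and cA2: "card A2 \<ge> 3" and cB2: "card B2 \<ge> 3"
  and iso: "graph_iso (H_verts A1 B1 E1) (H_edges A1 B1 E1) (H_verts A2 B2 E2) (H_edges A2 B2 E2)"
  shows "graph_iso V1 E1 V2 E2"
proof -
  define HV1 where "HV1 = H_verts A1 B1 E1"
  define HE1 where "HE1 = H_edges A1 B1 E1"
  define HV2 where "HV2 = H_verts A2 B2 E2"
  define HE2 where "HE2 = H_edges A2 B2 E2"
  obtain h where bij: "bij_betw h HV1 HV2" and pres: "\<forall>u\<in>HV1. \<forall>v\<in>HV1. {u,v}\<in>HE1 \<longleftrightarrow> {h u, h v}\<in>HE2"
    using iso unfolding graph_iso_def HV1_def HE1_def HV2_def HE2_def by auto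
  have V1: "A1 \<union> B1 = V1" and g1: "graph V1 E1" using b1 unfolding bipartite_with_def by blast+
  have V2: "A2 \<union> B2 = V2" and g2: "graph V2 E2" using b2 unfolding bipartite_with_def by blast+
  have bb1: "bipartite_with (A1 \<union> B1) E1 A1 B1" using b1 V1 by simp
  have bb2: "bipartite_with (A2 \<union> B2) E2 A2 B2" using b2 V2 by simp
  note big1 = big_iff[OF bb1 cA1 cB1, folded HV1_def HE1_def]
  note big2 = big_iff[OF bb2 cA2 cB2, folded HV2_def HE2_def]
  note com1 = common_iff[OF bb1 cA1 cB1, folded HV1_def HE1_def]
  note com2 = common_iff[OF bb2 cA2 cB2, folded HV2_def HE2_def]
  have H1: "HV1 = Inl ` V1 \<union> Inr ` E1" using V1 by (simp add: HV1_def H_verts_def)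
  have H2: "HV2 = Inl ` V2 \<union> Inr ` E2" using V2 by (simp add: HV2_def H_verts_def)
  have inj: "inj_on h HV1" using bij by (rule bij_betw_imp_inj_on)
  have im: "h ` HV1 = HV2" using bij by (rule bij_betw_imp_surj_on)
  have bigh: "\<And>v. v \<in> HV1 \<Longrightarrow> big HV1 HE1 v \<longleftrightarrow> big HV2 HE2 (h v)"
    using iso_big[OF bij pres] by blast
  have L: "\<exists>y\<in>V2. h (Inl x) = Inl y" if x: "x \<in> V1" for x
  proof -
    have m: "Inl x \<in> HV1" using x H1 by simp
    then have "big HV1 HE1 (Inl x)" using big1 by simp
    then have b: "big HV2 HE2 (h (Inl x))" using bigh[OF m] by simp
    have m2: "h (Inl x) \<in> HV2" using m im by blast
    then obtain y where y: "h (Inl x) = Inl y" using big2[OF m2] b by blast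
    then have "y \<in> V2" using m2 H2 by auto
    then show ?thesis using y by blast
  qed
  define f where "f x = projl (h (Inl x))" for x
  have hf: "h (Inl x) = Inl (f x)" and fV: "f x \<in> V2" if "x \<in> V1" for x
    using L[OF that] unfolding f_def by auto
  have finj: "inj_on f V1"
  proof (rule inj_onI)
    fix x y assume x: "x \<in> V1" and y: "y \<in> V1" and "f x = f y"
    then have "h (Inl x) = h (Inl y)" using hf by simp
    moreover have "Inl x \<in> HV1" "Inl y \<in> HV1" using x y H1 by simp_all
    ultimately show "x = y" using inj by (metis inj_on_eq_iff sum.inject(1))
  qed
  have fim: "f ` V1 = V2"
  proof
    show "f ` V1 \<subseteq> V2" using fV by blast
  next
    show "V2 \<subseteq> f ` V1"
    proof
      fix y assume y: "y \<in> V2"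
      then have "Inl y \<in> HV2" using H2 by simp
      then obtain w where w: "w \<in> HV1" "h w = Inl y" using im by (metis imageE)
      have "big HV2 HE2 (Inl y)" using big2[OF \<open>Inl y \<in> HV2\<close>] by simp
      then have "big HV1 HE1 w" using bigh[OF w(1)] w(2) by simp
      then obtain x where x: "w = Inl x" using big1[OF w(1)] by blast
      then have "x \<in> V1" using w(1) H1 by auto
      moreover have "f x = y" using hf[OF \<open>x \<in> V1\<close>] w(2) x by simp
      ultimately show "y \<in> f ` V1" by blast
    qed
  qed
  have fbij: "bij_betw f V1 V2" using finj fim by (simp add: bij_betw_def)
  have fpres: "{u,v}\<in>E1 \<longleftrightarrow> {f u, f v}\<in>E2" if u: "u\<in>V1" and v: "v\<in>V1" for u v
  proof (cases "u = v")
    case True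
    then show ?thesis using graph_no_loop[OF g1] graph_no_loop[OF g2] by simp
  next
    case False
    then have fne: "f u \<noteq> f v" using finj u v by (metis inj_on_eq_iff)
    have mu: "Inl u \<in> HV1" "Inl v \<in> HV1" using u v H1 by simp_all
    have "(\<exists>c\<in>HV1. \<not> big HV1 HE1 c \<and> {Inl u, c} \<in> HE1 \<and> {Inl v, c} \<in> HE1) \<longleftrightarrow>
          (\<exists>c\<in>HV2. \<not> big HV2 HE2 c \<and> {Inl (f u), c} \<in> HE2 \<and> {Inl (f v), c} \<in> HE2)"
    proof
      assume "\<exists>c\<in>HV1. \<not> big HV1 HE1 c \<and> {Inl u, c} \<in> HE1 \<and> {Inl v, c} \<in> HE1"
      then obtain c where c: "c\<in>HV1" "\<not> big HV1 HE1 c" "{Inl u, c} \<in> HE1" "{Inl v, c} \<in> HE1" by blast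
      have "h c \<in> HV2" using c(1) im by blast
      moreover have "\<not> big HV2 HE2 (h c)" using bigh[OF c(1)] c(2) by simp
      moreover have "{Inl (f u), h c} \<in> HE2" using pres[rule_format, OF mu(1) c(1)] c(3) hf[OF u] by simp
      moreover have "{Inl (f v), h c} \<in> HE2" using pres[rule_format, OF mu(2) c(1)] c(4) hf[OF v] by simp
      ultimately show "\<exists>c\<in>HV2. \<not> big HV2 HE2 c \<and> {Inl (f u), c} \<in> HE2 \<and> {Inl (f v), c} \<in> HE2" by blast
    next
      assume "\<exists>c\<in>HV2. \<not> big HV2 HE2 c \<and> {Inl (f u), c} \<in> HE2 \<and> {Inl (f v), c} \<in> HE2"
      then obtain c' where c: "c'\<in>HV2" "\<not> big HV2 HE2 c'" "{Inl (f u), c'} \<in> HE2" "{Inl (f v), c'} \<in> HE2" by blast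
      obtain c where cc: "c \<in> HV1" "c' = h c" using c(1) im by (metis imageE)
      have "\<not> big HV1 HE1 c" using bigh[OF cc(1)] c(2) cc(2) by simp
      moreover have "{Inl u, c} \<in> HE1" using pres[rule_format, OF mu(1) cc(1)] c(3) cc(2) hf[OF u] by simp
      moreover have "{Inl v, c} \<in> HE1" using pres[rule_format, OF mu(2) cc(1)] c(4) cc(2) hf[OF v] by simp
      ultimately show "\<exists>c\<in>HV1. \<not> big HV1 HE1 c \<and> {Inl u, c} \<in> HE1 \<and> {Inl v, c} \<in> HE1" using cc(1) by blast
    qed
    then show ?thesis using com1[OF False] com2[OF fne] by argo
  qed
  show ?thesis unfolding graph_iso_def using fbij fpres by auto
qed

theorem mainTheorem4:
  fixes V1 A1 B1 :: "'a set" and E1 :: "'a set set"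
    and V2 A2 B2 :: "'b set" and E2 :: "'b set set"
  assumes "bipartite_with V1 E1 A1 B1" and "connected_graph V1 E1"
    and "card A1 \<ge> 3" and "card B1 \<ge> 3"
    and "bipartite_with V2 E2 A2 B2" and "connected_graph V2 E2"
    and "card A2 \<ge> 3" and "card B2 \<ge> 3"
  shows "graph_iso V1 E1 V2 E2 \<longleftrightarrow>
         graph_iso (H_verts A1 B1 E1) (H_edges A1 B1 E1) (H_verts A2 B2 E2) (H_edges A2 B2 E2)"
  using fwd[OF assms(1,2,5)] bwd[OF assms(1,3,4,5,7,8)] by blast

end
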